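(* Let $(A,\ast,\alpha)$ be a nearly Hom-associative algebra over a field $\mathbb{K}$ of characteristic $0$. Then $(A,[\cdot,\cdot],\alpha)$ is a Hom-Lie algebra, where $[x,y]=x\ast y-y\ast x$ for all $x,y\in A$.
   Context: A nearly Hom-associative algebra is a triple $(A,\ast,\alpha)$ with $A$ a linear space, $\ast:A\times A\to A$ bilinear and $\alpha:A\to A$ linear, such that $\alpha(x)\ast(y\ast z)=(z\ast x)\ast\alpha(y)$ for all $x,y,z\in A$. A Hom-Lie algebra is a triple $(A,[\cdot,\cdot],\alpha)$ with $[\cdot,\cdot]$ bilinear and $\alpha$ linear such that $[x,y]=-[y,x]$ and $[\alpha(x),[y,z]]+[\alpha(y),[z,x]]+[\alpha(z),[x,y]]=0$ for all $x,y,z$. *)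

theory Defs
  imports Complex_Main
begin

definition bilinear_map :: "('k::field \<Rightarrow> 'a::ab_group_add \<Rightarrow> 'a) \<Rightarrow> ('a \<Rightarrow> 'a \<Rightarrow> 'a) \<Rightarrow> bool" where
  "bilinear_map s m \<longleftrightarrow> (\<forall>x. Vector_Spaces.linear s s (m x)) \<and> (\<forall>y. Vector_Spaces.linear s s (\<lambda>x. m x y))"

definition nearly_hom_assoc :: "('k::field \<Rightarrow> 'a::ab_group_add \<Rightarrow> 'a) \<Rightarrow> ('a \<Rightarrow> 'a \<Rightarrow> 'a) \<Rightarrow> ('a \<Rightarrow> 'a) \<Rightarrow> bool" where
  "nearly_hom_assoc s m \<alpha> \<longleftrightarrow> vector_space s \<and> bilinear_map s m \<and> Vector_Spaces.linear s s \<alpha> \<and>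
     (\<forall>x y z. m (\<alpha> x) (m y z) = m (m z x) (\<alpha> y))"

definition hom_lie :: "('k::field \<Rightarrow> 'a::ab_group_add \<Rightarrow> 'a) \<Rightarrow> ('a \<Rightarrow> 'a \<Rightarrow> 'a) \<Rightarrow> ('a \<Rightarrow> 'a) \<Rightarrow> bool" where
  "hom_lie s b \<alpha> \<longleftrightarrow> vector_space s \<and> bilinear_map s b \<and> Vector_Spaces.linear s s \<alpha> \<and>
     (\<forall>x y. b x y = - b y x) \<and>
     (\<forall>x y z. b (\<alpha> x) (b y z) + b (\<alpha> y) (b z x) + b (\<alpha> z) (b x y) = 0)"

end

theory Submission
  imports Defs
begin

lemma lin_sub:
  assumes "vector_space s" "Vector_Spaces.linear s s f" "Vector_Spaces.linear s s g"
  shows "Vector_Spaces.linear s s (\<lambda>x. f x - g x)"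
proof -
  interpret vector_space_pair s s using assms(1) by (simp add: vector_space_pair_def)
  show ?thesis using assms(2,3) by (rule linear_compose_sub)
qed

theorem mainTheorem10:
  fixes s :: "'k::field_char_0 \<Rightarrow> 'a::ab_group_add \<Rightarrow> 'a"
    and m :: "'a \<Rightarrow> 'a \<Rightarrow> 'a" and \<alpha> :: "'a \<Rightarrow> 'a"
  assumes "nearly_hom_assoc s m \<alpha>"
  shows "hom_lie s (\<lambda>x y. m x y - m y x) \<alpha>"
proof -
  have vs: "vector_space s" and bl: "bilinear_map s m" and la: "Vector_Spaces.linear s s \<alpha>"
    and id: "\<And>x y z. m (\<alpha> x) (m y z) = m (m z x) (\<alpha> y)"
    using assms unfolding nearly_hom_assoc_def by auto
  have l1: "\<And>x. Vector_Spaces.linear s s (m x)" and l2: "\<And>y. Vector_Spaces.linear s s (\<lambda>x. m x y)"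
    using bl unfolding bilinear_map_def by auto
  have add1: "\<And>x a b. m x (a - b) = m x a - m x b"
    using l1 vs by (metis lin_sub[OF vs] linear_iff module_hom_iff_linear module_hom.diff)
  have add2: "\<And>y a b. m (a - b) y = m a y - m b y"
    using l2 vs by (metis module_hom_iff_linear module_hom.diff)
  have bil: "bilinear_map s (\<lambda>x y. m x y - m y x)"
    unfolding bilinear_map_def
    by (auto intro!: lin_sub[OF vs] l1 l2)
  have jac: "\<And>x y z. m (\<alpha> x) (m y z - m z y) - m (m y z - m z y) (\<alpha> x) +
       (m (\<alpha> y) (m z x - m x z) - m (m z x - m x z) (\<alpha> y)) +
       (m (\<alpha> z) (m x y - m y x) - m (m x y - m y x) (\<alpha> z)) = 0"
    by (simp add: add1 add2 id algebra_simps)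
  show ?thesis unfolding hom_lie_def using vs bil la jac by auto
qed

end
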